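(* Let $q\in(0.5,1)$. Consider the discrete-time system $$x_{k+1}=f(x_k)+G(x_k)u_k+w_k,$$ with state $x_k\in\mathbb{R}^n$, input $u_k\in\mathbb{R}^m$, disturbance $w_k\in\mathbb{R}^n$, and unknown functions $f:\mathbb{R}^n\to\mathbb{R}^n$, $G:\mathbb{R}^n\to\mathbb{R}^{n\times m}$. Let $H=[h_1,\dots,h_{n_c}]^\top\in\mathbb{R}^{n_c\times n}$ and $d=[d_1,\dots,d_{n_c}]^\top\in\mathbb{R}^{n_c}$. Assume: (A1) matrices $A\in\mathbb{R}^{n\times n}$, $B\in\mathbb{R}^{m\times m}$-compatible $B\in\mathbb{R}^{n\times m}$ are known, with approximation error $e(x,u):=f(x)+G(x)u-(Ax+Bu)$; (A2) the disturbance $w_k$ follows $\mathcal{N}(\mu_w,\Sigma_w)$ with known $\mu_w\in\mathbb{R}^n$, $\Sigma_w\in\mathbb{R}^{n\times n}$, and $w_k$ is uncorrelated with the exploration term $\varepsilon_k$ below; (A3) for a positive integer $\tau$, numbers $\bar\delta_j<\infty$, $\bar\Delta_j<\infty$ ($j=1,\dots,n_c$) are known with $\bar\delta_j\ge\sup_{x\in\mathbb{R}^n,u\in\mathbb{R}^m}|h_j^\top e(x,u)|$ and $\bar\Delta_j\ge\sup_{x\in\mathbb{R}^n,u\in\mathbb{R}^m}|h_j^\top(A^{\tau-1}+A^{\tau-2}+\cdots+I)e(x,u)|$. Suppose that, when the state at time $k$ is $x_k$, the input is generated as $u_k=\mu(x_k;\theta_k)+\varepsilon_k$ with $\varepsilon_k\sim\mathcal{N}(0,\Sigma_k)$,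 $\Sigma_k\in\mathbb{R}^{m\times m}$. Let $B'=[B,\ I]\in\mathbb{R}^{n\times(m+n)}$. If $$\left\|h_j^\top B'\begin{bmatrix}\Sigma_k&0\\0&\Sigma_w\end{bmatrix}^{1/2}\right\|_2\le\frac{1}{\Phi^{-1}(q)}\Big\{d_j-h_j^\top\big(Ax_k+B\mu(x_k;\theta_k)+\mu_w\big)+\delta_j\Big\}$$ for all $j=1,\dots,n_c$ and all $\delta_j\in\{\bar\delta_j,-\bar\delta_j\}$, then $\Pr\{h_j^\top x_{k+1}\le d_j\}\ge q$ for all $j=1,\dots,n_c$.
   Context: $\Phi$ denotes the cumulative distribution function of the standard normal distribution. $\mu(\cdot;\theta):\mathbb{R}^n\to\mathbb{R}^m$ is a deterministic feedback law (base policy) with parameter $\theta_k$ at time $k$. For a positive semidefinite matrix $M$, $M^{1/2}$ denotes its matrix square root. Probabilities are over the randomness of $\varepsilon_k$ and $w_k$ given the current state $x_k$. $\|\cdot\|_2$ is the Euclidean norm of a row vector. *)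

theory Defs
  imports "HOL-Analysis.Analysis" "HOL-Probability.Probability"
begin

definition Phi :: "real \<Rightarrow> real" where
  "Phi x = measure (density lborel std_normal_density) {..x}"

definition Phi_inv :: "real \<Rightarrow> real" where
  "Phi_inv q = (THE x. Phi x = q)"

definition gaussian_rv :: "'a measure \<Rightarrow> ('a \<Rightarrow> real) \<Rightarrow> real \<Rightarrow> real \<Rightarrow> bool" where
  "gaussian_rv M X m v \<longleftrightarrow>
     X \<in> borel_measurable M \<and>
     ((v = 0 \<and> distr M borel X = return borel m) \<or>
      (v > 0 \<and> distributed M lborel X (normal_density m (sqrt v))))"

definition psd_matrix :: "real^'n^'n \<Rightarrow> bool" where
  "psd_matrix S \<longleftrightarrow> transpose S = S \<and> (\<forall>x. 0 \<le> x \<bullet> (S *v x))"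

definition mvn_rv :: "'a measure \<Rightarrow> ('a \<Rightarrow> real^'n) \<Rightarrow> real^'n \<Rightarrow> real^'n^'n \<Rightarrow> bool" where
  "mvn_rv M X mu S \<longleftrightarrow> psd_matrix S \<and> X \<in> borel_measurable M \<and>
     (\<forall>a. gaussian_rv M (\<lambda>\<omega>. a \<bullet> X \<omega>) (a \<bullet> mu) (a \<bullet> (S *v a)))"

definition mat_sqrt :: "real^'n^'n \<Rightarrow> real^'n^'n" where
  "mat_sqrt S = (THE R. psd_matrix R \<and> R ** R = S)"

primrec mpow :: "real^'n^'n \<Rightarrow> nat \<Rightarrow> real^'n^'n" where
  "mpow A 0 = mat 1"
| "mpow A (Suc i) = A ** mpow A i"

definition aug_B :: "real^'m^'n \<Rightarrow> real^('m + 'n)^'n" where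
  "aug_B B = (\<chi> i j. case j of Inl l \<Rightarrow> B $ i $ l | Inr l \<Rightarrow> (if l = i then 1 else 0))"

definition block_diag :: "real^'m^'m \<Rightarrow> real^'n^'n \<Rightarrow> real^('m + 'n)^('m + 'n)" where
  "block_diag S1 S2 = (\<chi> i j. case (i, j) of
       (Inl a, Inl b) \<Rightarrow> S1 $ a $ b
     | (Inr a, Inr b) \<Rightarrow> S2 $ a $ b
     | _ \<Rightarrow> 0)"

end

theory Submission
  imports Defs
begin


lemma spectral_aux:
  fixes T :: "'a::euclidean_space \<Rightarrow> 'a"
  assumes lin: "linear T" and sa: "\<And>x y. inner (T x) y = inner x (T y)"
  shows "subspace V \<Longrightarrow> (\<And>x. x \<in> V \<Longrightarrow> T x \<in> V) \<Longrightarrow>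
    \<exists>B. finite B \<and> B \<subseteq> V \<and> (\<forall>b\<in>B. norm b = 1 \<and> T b = inner b (T b) *\<^sub>R b) \<and>
        (\<forall>b\<in>B. \<forall>c\<in>B. b \<noteq> c \<longrightarrow> inner b c = 0) \<and> (\<forall>x\<in>V. x = (\<Sum>b\<in>B. inner b x *\<^sub>R b))"
proof (induction "dim V" arbitrary: V rule: less_induct)
  case less
  note sub = less.prems(1) and inv = less.prems(2)
  show ?case
  proof (cases "V \<subseteq> {0}")
    case True
    then show ?thesis by (intro exI[of _ "{}"]) auto
  next
    case False
    then obtain x0 where x0: "x0 \<in> V" "x0 \<noteq> 0" by auto
    define K where "K = V \<inter> sphere 0 1"
    have "compact K" unfolding K_def
      by (simp add: closed_subspace closed_Int_compact sub)
    moreover have "x0 /\<^sub>R norm x0 \<in> K" unfolding K_def using x0 sub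
      by (auto simp: subspace_scale)
    hence "K \<noteq> {}" by auto
    moreover have "continuous_on K (\<lambda>y. inner y (T y))"
      using lin by (intro continuous_intros linear_continuous_on) (auto simp: linear_conv_bounded_linear)
    ultimately obtain v where v: "v \<in> K" and vmax: "\<And>y. y \<in> K \<Longrightarrow> inner y (T y) \<le> inner v (T v)"
      using continuous_attains_sup[of K "\<lambda>y. inner y (T y)"] by blast
    define l where "l = inner v (T v)"
    have vV: "v \<in> V" and nv: "norm v = 1" using v by (auto simp: K_def)
    have vv: "inner v v = 1" using nv by (simp add: norm_eq_sqrt_inner)
    have le: "inner y (T y) \<le> l * inner y y" if "y \<in> V" for y
    proof (cases "y = 0")
      case True then show ?thesis using lin by (simp add: linear_0)
    next
      case False
      have "y /\<^sub>R norm y \<in> K" unfolding K_def using that sub False by (auto simp: subspace_scale)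
      hence "inner (y /\<^sub>R norm y) (T (y /\<^sub>R norm y)) \<le> l" using vmax l_def by blast
      hence "inner y (T y) / (norm y)^2 \<le> l" using lin
        by (simp add: linear_scale power2_eq_square divide_inverse mult.commute mult.left_commute)
      moreover have "(norm y)^2 = inner y y" by (simp add: power2_norm_eq_inner)
      ultimately show ?thesis using False by (simp add: divide_le_eq)
    qed
    define u where "u = T v - l *\<^sub>R v"
    have uV: "u \<in> V" unfolding u_def using vV inv sub by (simp add: subspace_diff subspace_scale)
    have uv: "inner u v = 0" unfolding u_def l_def using vv by (simp add: inner_diff_left inner_diff_right inner_commute)
    have uTv: "inner u (T v) = inner u u"
      unfolding u_def by (simp add: inner_diff_left inner_diff_right l_def inner_commute vv)
    have key: "2 * t * inner u u + t^2 * inner u (T u) \<le> l * t^2 * inner u u" for t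
    proof -
      have "v + t *\<^sub>R u \<in> V" using vV uV sub by (simp add: subspace_add subspace_scale)
      from le[OF this] have "inner (v + t *\<^sub>R u) (T (v + t *\<^sub>R u)) \<le> l * inner (v + t *\<^sub>R u) (v + t *\<^sub>R u)" .
      moreover have "inner (v + t *\<^sub>R u) (T (v + t *\<^sub>R u)) = l + 2 * t * inner u u + t^2 * inner u (T u)"
        using lin uTv sa[of u v] unfolding l_def
        by (simp add: linear_add linear_scale inner_add_left inner_add_right power2_eq_square algebra_simps inner_commute)
      moreover have "inner (v + t *\<^sub>R u) (v + t *\<^sub>R u) = 1 + t^2 * inner u u"
        using vv uv by (simp add: inner_add_left inner_add_right power2_eq_square inner_commute)
      ultimately have "l + 2 * t * inner u u + t^2 * inner u (T u) \<le> l * (1 + t^2 * inner u u)" by metis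
      thus ?thesis by (simp add: algebra_simps)
    qed
    have uu0: "inner u u = 0"
    proof -
      define k where "k = l * inner u u - inner u (T u)"
      have kk: "2 * t * inner u u \<le> t^2 * k" for t using key[of t] unfolding k_def by (simp add: algebra_simps)
      have nn: "inner u u \<ge> 0" by simp
      show ?thesis
      proof (cases "k \<le> 0")
        case True
        from kk[of 1] True nn have "2 * inner u u \<le> 0" by simp
        thus ?thesis using nn by linarith
      next
        case False
        from kk[of "inner u u / k"] False nn have "2 * (inner u u)^2 / k \<le> (inner u u)^2 / k"
          by (simp add: power2_eq_square field_simps)
        hence "(inner u u)^2 \<le> 0" using False by (simp add: divide_le_eq)
        thus ?thesis by (metis power2_less_eq_zero_iff inner_eq_zero_iff)
      qed
    qed
    hence Tv: "T v = l *\<^sub>R v" unfolding u_def by simp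
    define W where "W = V \<inter> {x. inner v x = 0}"
    have subW: "subspace W" unfolding W_def
      proof (rule subspace_inter[OF sub])
      have "{x. inner v x = 0} = {y. orthogonal v y}" by (auto simp: orthogonal_def)
      then show "subspace {x. inner v x = 0}" using subspace_orthogonal_to_vector[of v] by simp
    qed
    have invW: "T x \<in> W" if "x \<in> W" for x
    proof -
      have "inner v (T x) = inner (T v) x" by (simp add: sa)
      also have "\<dots> = 0" using that Tv by (simp add: W_def)
      finally show ?thesis using that inv by (simp add: W_def)
    qed
    have "v \<notin> W" using vv by (simp add: W_def)
    hence "W \<subset> V" using vV W_def by blast
    moreover have "span W = W" "span V = V" using subW sub by (simp_all add: span_eq_iff)
    ultimately have "dim W < dim V" by (metis dim_psubset)
    from less.hyps[OF this subW invW] obtain B where B: "finite B" "B \<subseteq> W"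
      "\<forall>b\<in>B. norm b = 1 \<and> T b = inner b (T b) *\<^sub>R b"
      "\<forall>b\<in>B. \<forall>c\<in>B. b \<noteq> c \<longrightarrow> inner b c = 0" "\<forall>x\<in>W. x = (\<Sum>b\<in>B. inner b x *\<^sub>R b)" by blast
    have vB: "v \<notin> B" using B(2) vv by (auto simp: W_def)
    have Bv: "inner b v = 0" "inner v b = 0" if "b \<in> B" for b using B(2) that by (auto simp: W_def inner_commute)
    show ?thesis
    proof (intro exI[of _ "insert v B"] conjI ballI impI)
      show "finite (insert v B)" using B by simp
      show "insert v B \<subseteq> V" using B vV by (auto simp: W_def)
      fix b assume "b \<in> insert v B"
      then show "norm b = 1" using B nv by auto
    next
      fix b assume "b \<in> insert v B"
      then show "T b = inner b (T b) *\<^sub>R b" using B Tv vv by (auto simp: l_def)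
    next
      fix b c assume "b \<in> insert v B" "c \<in> insert v B" "b \<noteq> c"
      then show "inner b c = 0" using B Bv by auto
    next
      fix x assume xV: "x \<in> V"
      define x' where "x' = x - inner v x *\<^sub>R v"
      have "x' \<in> W" unfolding W_def x'_def using xV vV sub vv
        by (simp add: subspace_diff subspace_scale inner_diff_right)
      hence "x' = (\<Sum>b\<in>B. inner b x' *\<^sub>R b)" using B by blast
      also have "\<dots> = (\<Sum>b\<in>B. inner b x *\<^sub>R b)"
        by (intro sum.cong) (auto simp: x'_def inner_diff_right Bv)
      finally have "x = inner v x *\<^sub>R v + (\<Sum>b\<in>B. inner b x *\<^sub>R b)" unfolding x'_def by (simp add: algebra_simps)
      then show "x = (\<Sum>b\<in>insert v B. inner b x *\<^sub>R b)" using B vB by simp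
    qed
  qed
qed

lemma sym_adj:
  fixes S :: "real^'n^'n"
  assumes "transpose S = S"
  shows "inner (S *v x) y = inner x (S *v y)"
proof -
  have "inner (S *v x) y = inner (x v* S) y" using assms
    by (metis transpose_matrix_vector)
  also have "\<dots> = inner x (S *v y)" by (rule dot_lmul_matrix)
  finally show ?thesis .
qed

lemma adj_sym:
  fixes A :: "real^'n^'n"
  assumes "\<And>x y. inner x (A *v y) = inner (A *v x) y"
  shows "transpose A = A"
proof -
  have "transpose A *v x = A *v x" for x
  proof -
    define z where "z = transpose A *v x - A *v x"
    have "inner z y = 0" for y
    proof -
      have "inner (transpose A *v x) y = inner x (A *v y)"
        by (simp add: dot_lmul_matrix)
      then show ?thesis unfolding z_def using assms[of x y] by (simp add: inner_diff_left)
    qed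
    from this[of z] have "z = 0" by simp
    then show ?thesis unfolding z_def by simp
  qed
  then show ?thesis by (simp add: matrix_eq)
qed

lemma mv_sum: "(A::real^'n^'m) *v sum g X = (\<Sum>x\<in>X. A *v g x)"
  by (induction X rule: infinite_finite_induct) (simp_all add: matrix_vector_right_distrib)

lemma inner_sum_orth:
  fixes B :: "'a::real_inner set"
  assumes "finite B" "b \<in> B" "\<forall>b\<in>B. \<forall>c\<in>B. b \<noteq> c \<longrightarrow> inner b c = 0" "norm b = 1"
  shows "inner b (\<Sum>c\<in>B. g c *\<^sub>R c) = g b"
proof -
  have "inner b (\<Sum>c\<in>B. g c *\<^sub>R c) = (\<Sum>c\<in>B. g c * inner b c)"
    by (simp add: inner_sum_right)
  also have "\<dots> = g b * inner b b + (\<Sum>c\<in>B - {b}. g c * inner b c)"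
    using assms by (simp add: sum.remove)
  also have "(\<Sum>c\<in>B - {b}. g c * inner b c) = 0"
    using assms by (intro sum.neutral) auto
  also have "inner b b = 1" using assms(4) by (simp add: norm_eq_sqrt_inner)
  finally show ?thesis by simp
qed

lemma mat_sqrt_ok:
  fixes S :: "real^'n^'n"
  assumes psd: "psd_matrix S"
  shows "psd_matrix (mat_sqrt S) \<and> mat_sqrt S ** mat_sqrt S = S"
proof -
  have symS: "transpose S = S" and nnS: "\<And>x. 0 \<le> inner x (S *v x)" using psd by (auto simp: psd_matrix_def)
  have lin: "linear (\<lambda>x. S *v x)" by simp
  have sa: "\<And>x y. inner (S *v x) y = inner x (S *v y)" by (rule sym_adj[OF symS])
  note spectral_aux[of "\<lambda>x. S *v x" UNIV, OF lin sa subspace_UNIV]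
  then obtain B where fin: "finite B" and unit: "\<And>b. b \<in> B \<Longrightarrow> norm b = 1"
    and eig: "\<And>b. b \<in> B \<Longrightarrow> S *v b = inner b (S *v b) *\<^sub>R b"
    and orth: "\<forall>b\<in>B. \<forall>c\<in>B. b \<noteq> c \<longrightarrow> inner b c = 0"
    and exp: "\<And>x. x = (\<Sum>b\<in>B. inner b x *\<^sub>R b)" by auto
  define lam where "lam b = inner b (S *v b)" for b
  have eig': "S *v b = lam b *\<^sub>R b" if "b \<in> B" for b unfolding lam_def by (rule eig[OF that])
  have lam0: "lam b \<ge> 0" for b using nnS by (simp add: lam_def)
  define f where "f x = (\<Sum>b\<in>B. (sqrt (lam b) * inner b x) *\<^sub>R b)" for x
  have linf: "linear f"
    by (rule linearI) (simp_all add: f_def inner_add_right algebra_simps sum.distrib scaleR_add_left scaleR_sum_right)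
  define R where "R = matrix f"
  have Rv: "R *v x = f x" for x using linf by (simp add: R_def matrix_works)
  have innf: "inner b (f x) = sqrt (lam b) * inner b x" if "b \<in> B" for b x
    unfolding f_def using inner_sum_orth[OF fin that orth unit[OF that]] .
  have Sx: "S *v x = (\<Sum>b\<in>B. (lam b * inner b x) *\<^sub>R b)" for x
  proof -
    have "S *v x = S *v (\<Sum>b\<in>B. inner b x *\<^sub>R b)" by (rule arg_cong[OF exp[of x]])
    also have "\<dots> = (\<Sum>b\<in>B. inner b x *\<^sub>R (S *v b))"
      by (simp add: mv_sum matrix_vector_mult_scaleR)
    also have "\<dots> = (\<Sum>b\<in>B. (lam b * inner b x) *\<^sub>R b)"
      by (intro sum.cong refl) (simp add: eig')
    finally show ?thesis .
  qed
  have RR: "R ** R = S"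
  proof -
    have "(R ** R) *v x = S *v x" for x
    proof -
      have "(R ** R) *v x = f (f x)" by (simp add: Rv matrix_vector_mul_assoc[symmetric])
      also have "\<dots> = (\<Sum>b\<in>B. (sqrt (lam b) * inner b (f x)) *\<^sub>R b)" by (simp add: f_def)
      also have "\<dots> = (\<Sum>b\<in>B. (lam b * inner b x) *\<^sub>R b)"
        by (intro sum.cong refl) (simp add: innf lam0 mult.assoc[symmetric])
      finally show ?thesis using Sx by simp
    qed
    then show ?thesis by (simp add: matrix_eq)
  qed
  have innfx: "inner y (f x) = (\<Sum>b\<in>B. sqrt (lam b) * inner b x * inner b y)" for x y
    by (simp add: f_def inner_sum_right mult.commute mult.left_commute inner_commute)
  have psdR: "psd_matrix R"
    unfolding psd_matrix_def
  proof
    show "transpose R = R"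
      by (rule adj_sym) (simp add: Rv innfx inner_commute[of "f _"] mult.commute mult.left_commute)
    show "\<forall>x. 0 \<le> inner x (R *v x)"
      by (simp add: Rv innfx lam0 sum_nonneg mult.assoc)
  qed
  have uniq: "R' = R" if "psd_matrix R'" "R' ** R' = S" for R'
  proof -
    have symR': "transpose R' = R'" and nnR': "\<And>x. 0 \<le> inner x (R' *v x)" using that by (auto simp: psd_matrix_def)
    have R'b: "R' *v b = sqrt (lam b) *\<^sub>R b" if bB: "b \<in> B" for b
    proof -
      define s where "s = sqrt (lam b)"
      define y where "y = R' *v b - s *\<^sub>R b"
      have ss: "s * s = lam b" using lam0 by (simp add: s_def)
      have Sb: "R' *v (R' *v b) = lam b *\<^sub>R b" using eig'[OF bB] \<open>R' ** R' = S\<close>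
        by (simp add: matrix_vector_mul_assoc)
      have Ry: "R' *v y = - s *\<^sub>R y"
        unfolding y_def using Sb ss by (simp add: algebra_simps matrix_vector_mult_diff_distrib matrix_vector_mult_scaleR)
      have "y = 0"
      proof (cases "s = 0")
        case True
        have "inner y y = inner b (R' *v (R' *v b))" using True
          by (simp add: y_def sym_adj[OF symR'])
        also have "\<dots> = 0" using True ss Sb by simp
        finally show ?thesis by simp
      next
        case False
        hence "s > 0" using lam0[of b] by (simp add: s_def)
        have "0 \<le> inner y (R' *v y)" by (rule nnR')
        also have "\<dots> = - s * inner y y" by (simp add: Ry)
        finally have "inner y y \<le> 0" using \<open>s > 0\<close> by (simp add: mult_le_0_iff)
        thus ?thesis by (metis inner_ge_zero inner_eq_zero_iff order_antisym)
      qed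
      thus ?thesis by (simp add: y_def s_def)
    qed
    have "R' *v x = R *v x" for x
    proof -
      have "R' *v x = R' *v (\<Sum>b\<in>B. inner b x *\<^sub>R b)" by (rule arg_cong[OF exp[of x]])
      also have "\<dots> = (\<Sum>b\<in>B. inner b x *\<^sub>R (R' *v b))"
        by (simp add: mv_sum matrix_vector_mult_scaleR)
      also have "\<dots> = f x" unfolding f_def
        by (intro sum.cong refl) (simp add: R'b mult.commute)
      finally show ?thesis by (simp add: Rv)
    qed
    then show ?thesis by (simp add: matrix_eq)
  qed
  have "\<exists>!R. psd_matrix R \<and> R ** R = S" using psdR RR uniq by blast
  from theI'[OF this] show ?thesis unfolding mat_sqrt_def .
qed



lemma sum_UNIV_Plus:
  "(\<Sum>i\<in>(UNIV::('a::finite + 'b::finite) set). g i) = (\<Sum>a\<in>UNIV. g (Inl a)) + (\<Sum>b\<in>UNIV. g (Inr b))"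
proof -
  have "(\<Sum>i\<in>(UNIV::('a + 'b) set). g i) = (\<Sum>i\<in>(UNIV <+> UNIV). g i)" by simp
  also have "\<dots> = (\<Sum>a\<in>UNIV. g (Inl a)) + (\<Sum>b\<in>UNIV. g (Inr b))"
    by (subst sum.Plus) (simp_all add: o_def)
  finally show ?thesis .
qed

lemma block_diag_quad:
  fixes S1 :: "real^'m^'m" and S2 :: "real^'n^'n" and v :: "real^('m+'n)"
  shows "inner v (block_diag S1 S2 *v v) =
    inner (\<chi> a. v $ Inl a) (S1 *v (\<chi> a. v $ Inl a)) + inner (\<chi> b. v $ Inr b) (S2 *v (\<chi> b. v $ Inr b))"
  by (simp add: inner_vec_def matrix_vector_mult_def block_diag_def sum_UNIV_Plus)

lemma block_diag_transpose:
  fixes S1 :: "real^'m^'m" and S2 :: "real^'n^'n"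
  assumes "transpose S1 = S1" "transpose S2 = S2"
  shows "transpose (block_diag S1 S2) = block_diag S1 S2"
proof -
  have a: "S1 $ x $ y = S1 $ y $ x" for x y using arg_cong[OF assms(1), of "\<lambda>M. M $ x $ y"]
    by (simp add: transpose_def)
  have b: "S2 $ x $ y = S2 $ y $ x" for x y using arg_cong[OF assms(2), of "\<lambda>M. M $ x $ y"]
    by (simp add: transpose_def)
  show ?thesis
    by (simp add: vec_eq_iff transpose_def block_diag_def split: sum.split) (auto simp: a b)
qed

lemma block_diag_psd:
  assumes "psd_matrix S1" "psd_matrix S2"
  shows "psd_matrix (block_diag S1 S2)"
  using assms unfolding psd_matrix_def
  by (auto simp: block_diag_transpose block_diag_quad intro: add_nonneg_nonneg)

lemma augB_Inl: "(h v* aug_B B) $ Inl l = (h v* B) $ l"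
  by (simp add: vector_matrix_mult_def aug_B_def mult.commute)

lemma augB_Inr: "(h v* aug_B B) $ Inr l = h $ l"
  by (simp add: vector_matrix_mult_def aug_B_def if_distrib cong: if_cong)

lemma quad_aug:
  fixes h :: "real^'n" and B :: "real^'m^'n"
  shows "inner (h v* aug_B B) (block_diag S1 S2 *v (h v* aug_B B)) =
     inner (h v* B) (S1 *v (h v* B)) + inner h (S2 *v h)"
proof -
  have "(\<chi> a. (h v* aug_B B) $ Inl a) = h v* B" by (simp add: vec_eq_iff augB_Inl)
  moreover have "(\<chi> a. (h v* aug_B B) $ Inr a) = h" by (simp add: vec_eq_iff augB_Inr)
  ultimately show ?thesis by (simp add: block_diag_quad)
qed



abbreviation "stdD \<equiv> density lborel std_normal_density"

lemma stdD_real_distribution: "real_distribution stdD"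
  unfolding real_distribution_def real_distribution_axioms_def using prob_space_normal_density by auto

lemma Phi_cdf: "Phi x = cdf stdD x"
  by (simp add: Phi_def cdf_def)

lemma stdD_singleton: "measure stdD {x} = 0"
proof -
  have "emeasure stdD {x} = (\<integral>\<^sup>+ t. ennreal (std_normal_density t) * indicator {x} t \<partial>lborel)"
    by (subst emeasure_density) auto
  also have "\<dots> = 0"
  proof (subst nn_integral_0_iff_AE)
    show "AE t in lborel. ennreal (std_normal_density t) * indicator {x} t = 0"
      using AE_lborel_singleton[of x] by (rule eventually_mono) (simp split: split_indicator)
  qed simp
  finally show ?thesis by (simp add: measure_def)
qed

lemma isCont_Phi: "isCont Phi x"
proof -
  interpret real_distribution stdD by (rule stdD_real_distribution)
  have "isCont (cdf stdD) x" using isCont_cdf stdD_singleton by blast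
  moreover have "Phi = cdf stdD" using Phi_cdf by blast
  ultimately show ?thesis by simp
qed

lemma Phi_strict_mono:
  assumes "x < y" shows "Phi x < Phi y"
proof -
  interpret real_distribution stdD by (rule stdD_real_distribution)
  have "emeasure stdD {x<..y} \<noteq> 0"
  proof
    assume "emeasure stdD {x<..y} = 0"
    hence "(\<integral>\<^sup>+ t. ennreal (std_normal_density t) * indicator {x<..y} t \<partial>lborel) = 0"
      by (subst (asm) emeasure_density) auto
    hence "AE t in lborel. ennreal (std_normal_density t) * indicator {x<..y} t = 0"
      by (subst (asm) nn_integral_0_iff_AE) auto
    moreover have pos: "std_normal_density t > 0" for t by (simp add: normal_density_pos)
    moreover have "t \<notin> {x<..y}" if "ennreal (std_normal_density t) * indicator {x<..y} t = 0" for t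
    proof
      assume "t \<in> {x<..y}"
      hence "ennreal (std_normal_density t) = 0" using that by simp
      hence "std_normal_density t \<le> 0" by (simp add: ennreal_eq_0_iff)
      thus False using pos[of t] by linarith
    qed
    ultimately have "AE t in lborel. t \<notin> {x<..y}"
      by (elim eventually_mono) blast
    hence "emeasure lborel {x<..y} = 0"
      by (subst (asm) AE_iff_measurable[of "{x<..y}"]) auto
    thus False using assms by simp
  qed
  hence "measure stdD {x<..y} \<noteq> 0" by (simp add: emeasure_eq_measure)
  hence "measure stdD {x<..y} > 0" using measure_nonneg[of stdD "{x<..y}"] by linarith
  thus ?thesis using cdf_diff_eq[OF assms] by (simp add: Phi_cdf)
qed

lemma Phi_mono: "x \<le> y \<Longrightarrow> Phi x \<le> Phi y"
  using Phi_strict_mono by (cases "x = y") (auto simp: order_le_less)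

lemma Phi_zero: "Phi 0 = 1/2"
proof -
  interpret real_distribution stdD by (rule stdD_real_distribution)
  have d: "distributed stdD lborel (\<lambda>x. x) std_normal_density"
    unfolding distributed_def by (auto simp: distr_id2)
  have "distributed stdD lborel (\<lambda>x. 0 + (-1) * x) (normal_density (0 + (-1) * 0) (\<bar>-1\<bar> * 1))"
    by (rule normal_density_affine[OF d]) auto
  hence d2: "distr stdD lborel (\<lambda>x. - x) = stdD" and m: "(\<lambda>x. - x) \<in> measurable stdD lborel"
    by (auto simp: distributed_def)
  have "measure stdD {0..} = measure (distr stdD lborel (\<lambda>x. - x)) {..0}"
    by (subst measure_distr[OF m]) (auto intro!: arg_cong[where f="measure stdD"])
  also have "\<dots> = measure stdD {..0}" using d2 by simp
  finally have e1: "measure stdD {0..} = measure stdD {..0}" .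
  have "measure stdD ({..0} \<union> {0<..}) = measure stdD {..0} + measure stdD {0<..}"
    by (rule finite_measure_Union) auto
  moreover have "{..0} \<union> {0<..} = (UNIV :: real set)" by auto
  ultimately have e2: "measure stdD {..0} + measure stdD {0<..} = 1" using prob_space by simp
  have "measure stdD ({0} \<union> {0<..}) = measure stdD {0} + measure stdD {0<..}"
    by (rule finite_measure_Union) auto
  moreover have "{0} \<union> {0<..} = {0::real..}" by auto
  ultimately have e3: "measure stdD {0..} = measure stdD {0<..}" using stdD_singleton by simp
  show ?thesis using e1 e2 e3 by (simp add: Phi_def)
qed

lemma Phi_inv:
  assumes "0 < q" "q < 1"
  shows "Phi (Phi_inv q) = q"
proof -
  interpret real_distribution stdD by (rule stdD_real_distribution)
  have Pf: "Phi = cdf stdD" by (rule ext) (simp add: Phi_cdf)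
  have lt: "(Phi \<longlongrightarrow> 1) at_top" using cdf_lim_at_top_prob by (simp add: Pf)
  have lb: "(Phi \<longlongrightarrow> 0) at_bot" using cdf_lim_at_bot by (simp add: Pf)
  have "eventually (\<lambda>x. Phi x > q) at_top" using order_tendstoD(1)[OF lt assms(2)] .
  then obtain b where b: "Phi b > q" by (auto simp: eventually_at_top_linorder)
  have "eventually (\<lambda>x. Phi x < q) at_bot" using order_tendstoD(2)[OF lb assms(1)] .
  then obtain a where a: "Phi a < q" by (auto simp: eventually_at_bot_linorder)
  have "a \<le> b"
  proof (rule ccontr)
    assume "\<not> a \<le> b"
    hence "Phi b \<le> Phi a" by (intro Phi_mono) simp
    thus False using a b by simp
  qed
  then obtain x where x: "Phi x = q" using IVT[of Phi a q b] a b isCont_Phi by auto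
  have "\<exists>!x. Phi x = q"
  proof
    show "Phi x = q" by fact
    fix y assume "Phi y = q"
    show "y = x"
    proof (rule ccontr)
      assume "y \<noteq> x"
      hence "y < x \<or> x < y" by linarith
      thus False using Phi_strict_mono[of y x] Phi_strict_mono[of x y] x \<open>Phi y = q\<close> by auto
    qed
  qed
  then show ?thesis unfolding Phi_inv_def by (rule theI')
qed

lemma Phi_inv_pos:
  assumes "1/2 < q" "q < 1"
  shows "Phi_inv q > 0"
proof (rule ccontr)
  assume "\<not> Phi_inv q > 0"
  hence "Phi (Phi_inv q) \<le> Phi 0" by (intro Phi_mono) simp
  thus False using Phi_inv[of q] assms Phi_zero by simp
qed



lemma gaussian_rv_nonneg: "gaussian_rv M X m v \<Longrightarrow> v \<ge> 0"
  by (auto simp: gaussian_rv_def)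

lemma gaussian_rv_const_AE:
  assumes "gaussian_rv M X m 0"
  shows "AE \<omega> in M. X \<omega> = m"
proof -
  have X: "X \<in> borel_measurable M" and d: "distr M borel X = return borel m"
    using assms by (auto simp: gaussian_rv_def)
  have "AE x in distr M borel X. x = m" unfolding d by (subst AE_return) auto
  thus ?thesis by (subst (asm) AE_distr_iff[OF X]) auto
qed

lemma gaussian_rv_AE:
  assumes g: "gaussian_rv M Y m v" and Z: "Z \<in> borel_measurable M" and ae: "AE \<omega> in M. Z \<omega> = Y \<omega>"
  shows "gaussian_rv M Z m v"
proof -
  have Y: "Y \<in> borel_measurable M" using g by (simp add: gaussian_rv_def)
  have Zl: "Z \<in> measurable M lborel" using Z by simp
  have Yl: "Y \<in> measurable M lborel" using Y by simp
  have e1: "distr M borel Z = distr M borel Y" by (rule distr_cong_AE[OF refl refl ae Z Y])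
  have e2: "distr M lborel Z = distr M lborel Y" by (rule distr_cong_AE[OF refl refl ae Zl Yl])
  have dZ: "distributed M lborel Z f" if "distributed M lborel Y f" for f
    using that e2 Zl unfolding distributed_def by simp
  from g have "v = 0 \<and> distr M borel Y = return borel m \<or> v > 0 \<and> distributed M lborel Y (normal_density m (sqrt v))"
    unfolding gaussian_rv_def by blast
  then show ?thesis
  proof
    assume "v = 0 \<and> distr M borel Y = return borel m"
    then show ?thesis using Z e1 unfolding gaussian_rv_def by simp
  next
    assume "v > 0 \<and> distributed M lborel Y (normal_density m (sqrt v))"
    then show ?thesis using Z dZ unfolding gaussian_rv_def by blast
  qed
qed

lemma gaussian_rv_shift:
  assumes P: "prob_space M" and g: "gaussian_rv M X m v"
  shows "gaussian_rv M (\<lambda>\<omega>. X \<omega> + c) (m + c) v"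
proof -
  interpret prob_space M by fact
  have X: "X \<in> borel_measurable M" using g by (simp add: gaussian_rv_def)
  have Xc: "(\<lambda>\<omega>. X \<omega> + c) \<in> borel_measurable M" using X by measurable
  have pc: "(\<lambda>x::real. x + c) \<in> borel_measurable borel" by measurable
  show ?thesis
  proof (cases "v = 0")
    case True
    hence d: "distr M borel X = return borel m" using g by (simp add: gaussian_rv_def)
    have "distr (distr M borel X) borel (\<lambda>x. x + c) = distr M borel ((\<lambda>x. x + c) \<circ> X)"
      by (rule distr_distr[OF pc X])
    moreover have "distr (return borel m) borel (\<lambda>x. x + c) = return borel (m + c)"
      by (rule distr_return[OF pc]) simp
    ultimately have "distr M borel (\<lambda>\<omega>. X \<omega> + c) = return borel (m + c)"
      using d by (simp add: o_def)
    then show ?thesis using True Xc unfolding gaussian_rv_def by blast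
  next
    case False
    hence vp: "v > 0" and d: "distributed M lborel X (normal_density m (sqrt v))"
      using g by (auto simp: gaussian_rv_def)
    have "distributed M lborel (\<lambda>\<omega>. c + 1 * X \<omega>) (normal_density (c + 1 * m) (\<bar>1\<bar> * sqrt v))"
      by (rule normal_density_affine[OF d]) (use vp in auto)
    hence "distributed M lborel (\<lambda>\<omega>. X \<omega> + c) (normal_density (m + c) (sqrt v))"
      by (simp add: add.commute)
    then show ?thesis using vp Xc unfolding gaussian_rv_def by blast
  qed
qed

lemma gaussian_rv_add:
  assumes P: "prob_space M" and gX: "gaussian_rv M X m1 v1" and gY: "gaussian_rv M Y m2 v2"
    and ind: "prob_space.indep_var M borel X borel Y"
  shows "gaussian_rv M (\<lambda>\<omega>. X \<omega> + Y \<omega>) (m1 + m2) (v1 + v2)"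
proof -
  interpret prob_space M by fact
  have X: "X \<in> borel_measurable M" using gX by (simp add: gaussian_rv_def)
  have Y: "Y \<in> borel_measurable M" using gY by (simp add: gaussian_rv_def)
  have XY: "(\<lambda>\<omega>. X \<omega> + Y \<omega>) \<in> borel_measurable M" using X Y by simp
  have v1: "v1 \<ge> 0" and v2: "v2 \<ge> 0" using gX gY by (auto dest: gaussian_rv_nonneg)
  show ?thesis
  proof (cases "v1 = 0")
    case True
    have ae: "AE \<omega> in M. X \<omega> = m1" using gX True gaussian_rv_const_AE by blast
    have "gaussian_rv M (\<lambda>\<omega>. Y \<omega> + m1) (m2 + m1) v2" by (rule gaussian_rv_shift[OF P gY])
    hence "gaussian_rv M (\<lambda>\<omega>. X \<omega> + Y \<omega>) (m2 + m1) v2"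
      by (rule gaussian_rv_AE[OF _ XY]) (use ae in \<open>auto elim!: eventually_mono\<close>)
    thus ?thesis using True by (simp add: add.commute)
  next
    case False
    show ?thesis
    proof (cases "v2 = 0")
      case True
      have ae: "AE \<omega> in M. Y \<omega> = m2" using gY True gaussian_rv_const_AE by blast
      have "gaussian_rv M (\<lambda>\<omega>. X \<omega> + m2) (m1 + m2) v1" by (rule gaussian_rv_shift[OF P gX])
      hence "gaussian_rv M (\<lambda>\<omega>. X \<omega> + Y \<omega>) (m1 + m2) v1"
        by (rule gaussian_rv_AE[OF _ XY]) (use ae in \<open>auto elim!: eventually_mono\<close>)
      thus ?thesis using True by simp
    next
      case False2: False
      have dX: "distributed M lborel X (normal_density m1 (sqrt v1))" using gX False by (simp add: gaussian_rv_def)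
      have dY: "distributed M lborel Y (normal_density m2 (sqrt v2))" using gY False2 by (simp add: gaussian_rv_def)
      have p1: "sqrt v1 > 0" using v1 False by simp
      have p2: "sqrt v2 > 0" using v2 False2 by simp
      have "distributed M lborel (\<lambda>\<omega>. X \<omega> + Y \<omega>) (normal_density (m1 + m2) (sqrt ((sqrt v1)\<^sup>2 + (sqrt v2)\<^sup>2)))"
        by (rule add_indep_normal[OF ind p1 p2 dX dY])
      thus ?thesis using v1 v2 False XY by (simp add: gaussian_rv_def)
    qed
  qed
qed

lemma gaussian_rv_tail:
  assumes P: "prob_space M" and g: "gaussian_rv M X m v" and q: "1/2 < q" "q < 1"
    and c: "Phi_inv q * sqrt v \<le> c - m"
  shows "measure M {\<omega> \<in> space M. X \<omega> \<le> c} \<ge> q"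
proof -
  interpret prob_space M by fact
  have X: "X \<in> borel_measurable M" using g by (simp add: gaussian_rv_def)
  have pos: "Phi_inv q > 0" using Phi_inv_pos q by simp
  show ?thesis
  proof (cases "v = 0")
    case True
    hence d: "distr M borel X = return borel m" using g by (simp add: gaussian_rv_def)
    have "measure M {\<omega> \<in> space M. X \<omega> \<le> c} = measure (distr M borel X) {..c}"
      using X by (subst measure_distr) (auto intro!: arg_cong[where f="measure M"])
    also have "\<dots> = 1" using True c unfolding d by (subst measure_return) auto
    finally show ?thesis using q by simp
  next
    case False
    hence vp: "v > 0" using gaussian_rv_nonneg[OF g] by simp
    hence sp: "sqrt v > 0" by simp
    have d: "distributed M lborel X (normal_density m (sqrt v))" using g False by (simp add: gaussian_rv_def)
    hence d2: "distributed M lborel (\<lambda>\<omega>. (X \<omega> - m) / sqrt v) std_normal_density"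
      using normal_standard_normal_convert[OF sp] by simp
    hence Y: "(\<lambda>\<omega>. (X \<omega> - m) / sqrt v) \<in> measurable M lborel"
      and dd: "distr M lborel (\<lambda>\<omega>. (X \<omega> - m) / sqrt v) = stdD" by (auto simp: distributed_def)
    define t where "t = (c - m) / sqrt v"
    have "{\<omega> \<in> space M. X \<omega> \<le> c} = (\<lambda>\<omega>. (X \<omega> - m) / sqrt v) -` {..t} \<inter> space M"
      using sp by (auto simp: t_def divide_le_cancel)
    hence "measure M {\<omega> \<in> space M. X \<omega> \<le> c} = measure (distr M lborel (\<lambda>\<omega>. (X \<omega> - m) / sqrt v)) {..t}"
      using Y by (subst measure_distr) auto
    also have "\<dots> = Phi t" by (simp add: dd Phi_def)
    finally have e: "measure M {\<omega> \<in> space M. X \<omega> \<le> c} = Phi t" .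
    have "Phi_inv q \<le> t" using c sp by (simp add: t_def le_divide_eq)
    hence "Phi (Phi_inv q) \<le> Phi t" by (rule Phi_mono)
    thus ?thesis using e Phi_inv[of q] q by simp
  qed
qed



lemma norm_sqrt_quad:
  fixes S :: "real^'n^'n"
  assumes "psd_matrix S"
  shows "norm (v v* mat_sqrt S) = sqrt (inner v (S *v v))"
proof -
  define R where "R = mat_sqrt S"
  have ok: "psd_matrix R" "R ** R = S" using mat_sqrt_ok[OF assms] by (auto simp: R_def)
  have sym: "transpose R = R" using ok(1) by (simp add: psd_matrix_def)
  have "v v* R = R *v v" using sym by (metis transpose_matrix_vector)
  hence "inner (v v* R) (v v* R) = inner (R *v v) (R *v v)" by simp
  also have "\<dots> = inner v (R *v (R *v v))" by (rule sym_adj[OF sym])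
  also have "\<dots> = inner v (S *v v)" using ok(2) by (simp add: matrix_vector_mul_assoc)
  finally show ?thesis by (simp add: R_def norm_eq_sqrt_inner)
qed

lemma indep_inner:
  fixes eps :: "'w \<Rightarrow> real^'m" and w :: "'w \<Rightarrow> real^'n"
  assumes P: "prob_space M" and em: "eps \<in> borel_measurable M" and wm: "w \<in> borel_measurable M"
    and indep: "distr M (borel \<Otimes>\<^sub>M borel) (\<lambda>\<omega>. (eps \<omega>, w \<omega>)) = distr M borel eps \<Otimes>\<^sub>M distr M borel w"
  shows "prob_space.indep_var M borel (\<lambda>\<omega>. inner a (eps \<omega>)) borel (\<lambda>\<omega>. inner h (w \<omega>))"
proof -
  interpret prob_space M by fact
  have fa: "(\<lambda>e. inner a e) \<in> borel_measurable borel" by measurable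
  have fh: "(\<lambda>e. inner h e) \<in> borel_measurable borel" by measurable
  have U: "(\<lambda>\<omega>. inner a (eps \<omega>)) \<in> borel_measurable M" using em by measurable
  have V: "(\<lambda>\<omega>. inner h (w \<omega>)) \<in> borel_measurable M" using wm by measurable
  have ew: "(\<lambda>\<omega>. (eps \<omega>, w \<omega>)) \<in> measurable M (borel \<Otimes>\<^sub>M borel)" using em wm by measurable
  have phi: "(\<lambda>(x, y). (inner a x, inner h y)) \<in> measurable (borel \<Otimes>\<^sub>M borel) (borel \<Otimes>\<^sub>M borel)"
    by measurable
  have e1: "distr (distr M borel eps) borel (\<lambda>e. inner a e) = distr M borel (\<lambda>\<omega>. inner a (eps \<omega>))"
    using distr_distr[OF fa em] by (simp add: o_def)
  have e2: "distr (distr M borel w) borel (\<lambda>e. inner h e) = distr M borel (\<lambda>\<omega>. inner h (w \<omega>))"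
    using distr_distr[OF fh wm] by (simp add: o_def)
  have sf: "sigma_finite_measure (distr (distr M borel w) borel (\<lambda>e. inner h e))"
    unfolding e2 using prob_space_distr[OF V] by (simp add: prob_space_imp_sigma_finite)
  have "distr M borel (\<lambda>\<omega>. inner a (eps \<omega>)) \<Otimes>\<^sub>M distr M borel (\<lambda>\<omega>. inner h (w \<omega>))
      = distr (distr M borel eps \<Otimes>\<^sub>M distr M borel w) (borel \<Otimes>\<^sub>M borel) (\<lambda>(x, y). (inner a x, inner h y))"
    using pair_measure_distr[of "\<lambda>e. inner a e" "distr M borel eps" borel "\<lambda>e. inner h e" "distr M borel w" borel] fa fh sf
    by (simp add: e1 e2)
  also have "\<dots> = distr (distr M (borel \<Otimes>\<^sub>M borel) (\<lambda>\<omega>. (eps \<omega>, w \<omega>))) (borel \<Otimes>\<^sub>M borel) (\<lambda>(x, y). (inner a x, inner h y))"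
    by (simp add: indep)
  also have "\<dots> = distr M (borel \<Otimes>\<^sub>M borel) (\<lambda>\<omega>. (inner a (eps \<omega>), inner h (w \<omega>)))"
    using distr_distr[OF phi ew] by (simp add: o_def)
  finally show ?thesis using U V by (simp add: indep_var_distribution_eq)
qed

theorem lemma1:
  fixes M :: "'w measure"
    and f :: "real^'n \<Rightarrow> real^'n" and G :: "real^'n \<Rightarrow> real^'m^'n"
    and A :: "real^'n^'n" and B :: "real^'m^'n"
    and H :: "real^'n^'c" and d :: "real^'c"
    and mu_w :: "real^'n" and Sigma_w :: "real^'n^'n"
    and Sigma :: "real^'m^'m"
    and \<tau> :: nat and \<delta>bar \<Delta>bar :: "'c \<Rightarrow> real"
    and mu :: "real^'n \<Rightarrow> 'p \<Rightarrow> real^'m" and \<theta> :: 'p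
    and x :: "real^'n"
    and eps :: "'w \<Rightarrow> real^'m" and w :: "'w \<Rightarrow> real^'n"
    and q :: real
  assumes q: "0.5 < q" "q < 1"
    and P: "prob_space M"
    and W: "mvn_rv M w mu_w Sigma_w"
    and E: "mvn_rv M eps 0 Sigma"
    and indep: "distr M (borel \<Otimes>\<^sub>M borel) (\<lambda>\<omega>. (eps \<omega>, w \<omega>))
                 = distr M borel eps \<Otimes>\<^sub>M distr M borel w"
    and tau: "\<tau> \<ge> 1"
    and A3a: "\<And>j y u. \<bar>H $ j \<bullet> (f y + G y *v u - (A *v y + B *v u))\<bar> \<le> \<delta>bar j"
    and A3b: "\<And>j y u. \<bar>H $ j \<bullet> ((\<Sum>i<\<tau>. mpow A i) *v (f y + G y *v u - (A *v y + B *v u)))\<bar>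
                        \<le> \<Delta>bar j"
    and cond: "\<And>j \<delta>. \<delta> \<in> {\<delta>bar j, - \<delta>bar j} \<Longrightarrow>
        norm ((H $ j v* aug_B B) v* mat_sqrt (block_diag Sigma Sigma_w))
          \<le> (1 / Phi_inv q) * (d $ j - H $ j \<bullet> (A *v x + B *v mu x \<theta> + mu_w) + \<delta>)"
  shows "\<forall>j. measure M {\<omega> \<in> space M.
              H $ j \<bullet> (f x + G x *v (mu x \<theta> + eps \<omega>) + w \<omega>) \<le> d $ j} \<ge> q"
proof
  fix j
  interpret prob_space M by (rule P)
  define h where "h = H $ j"
  define a where "a = h v* B"
  define s1 where "s1 = inner a (Sigma *v a)"
  define s2 where "s2 = inner h (Sigma_w *v h)"
  have q': "1/2 < q" using q by simp
  have psdW: "psd_matrix Sigma_w" and wm: "w \<in> borel_measurable M"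
    and gW: "\<And>b. gaussian_rv M (\<lambda>\<omega>. inner b (w \<omega>)) (inner b mu_w) (inner b (Sigma_w *v b))"
    using W by (auto simp: mvn_rv_def)
  have psdE: "psd_matrix Sigma" and em: "eps \<in> borel_measurable M"
    and gE: "\<And>b. gaussian_rv M (\<lambda>\<omega>. inner b (eps \<omega>)) (inner b 0) (inner b (Sigma *v b))"
    using E by (auto simp: mvn_rv_def)
  have gU: "gaussian_rv M (\<lambda>\<omega>. inner a (eps \<omega>)) 0 s1" using gE[of a] by (simp add: s1_def)
  have gV: "gaussian_rv M (\<lambda>\<omega>. inner h (w \<omega>)) (inner h mu_w) s2" using gW[of h] by (simp add: s2_def)
  have ind: "prob_space.indep_var M borel (\<lambda>\<omega>. inner a (eps \<omega>)) borel (\<lambda>\<omega>. inner h (w \<omega>))"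
    by (rule indep_inner[OF P em wm indep])
  have gZ: "gaussian_rv M (\<lambda>\<omega>. inner a (eps \<omega>) + inner h (w \<omega>)) (0 + inner h mu_w) (s1 + s2)"
    by (rule gaussian_rv_add[OF P gU gV ind])
  have nrm: "norm ((H $ j v* aug_B B) v* mat_sqrt (block_diag Sigma Sigma_w)) = sqrt (s1 + s2)"
    using norm_sqrt_quad[OF block_diag_psd[OF psdE psdW]] quad_aug
    by (simp add: h_def a_def s1_def s2_def)
  define c where "c = d $ j - inner h (A *v x + B *v mu x \<theta>) - \<delta>bar j"
  have pos: "Phi_inv q > 0" using Phi_inv_pos[OF q' q(2)] .
  have "sqrt (s1 + s2) \<le> (1 / Phi_inv q) * (d $ j - h \<bullet> (A *v x + B *v mu x \<theta> + mu_w) + - \<delta>bar j)"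
    using cond[of "- \<delta>bar j" j] nrm by (simp add: h_def)
  hence "Phi_inv q * sqrt (s1 + s2) \<le> d $ j - h \<bullet> (A *v x + B *v mu x \<theta> + mu_w) - \<delta>bar j"
    using pos by (simp add: field_simps)
  hence cc: "Phi_inv q * sqrt (s1 + s2) \<le> c - (0 + inner h mu_w)"
    by (simp add: c_def inner_add_right)
  have tail: "measure M {\<omega> \<in> space M. inner a (eps \<omega>) + inner h (w \<omega>) \<le> c} \<ge> q"
    by (rule gaussian_rv_tail[OF P gZ q' q(2) cc])
  define g where "g = h v* G x"
  have Yeq: "H $ j \<bullet> (f x + G x *v (mu x \<theta> + e) + v) = inner h (f x + G x *v mu x \<theta>) + inner g e + inner h v" for e v
    by (simp add: h_def g_def dot_lmul_matrix inner_add_right matrix_vector_right_distrib)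
  have meas: "{\<omega> \<in> space M. H $ j \<bullet> (f x + G x *v (mu x \<theta> + eps \<omega>) + w \<omega>) \<le> d $ j} \<in> sets M"
    unfolding Yeq using em wm by measurable
  have sub: "{\<omega> \<in> space M. inner a (eps \<omega>) + inner h (w \<omega>) \<le> c} \<subseteq>
      {\<omega> \<in> space M. H $ j \<bullet> (f x + G x *v (mu x \<theta> + eps \<omega>) + w \<omega>) \<le> d $ j}"
  proof safe
    fix \<omega> assume \<omega>: "\<omega> \<in> space M" "inner a (eps \<omega>) + inner h (w \<omega>) \<le> c"
    define u where "u = mu x \<theta> + eps \<omega>"
    have e: "h \<bullet> (f x + G x *v u - (A *v x + B *v u)) \<le> \<delta>bar j"
      using A3a[of j x u] by (simp add: h_def)
    have "h \<bullet> (f x + G x *v u + w \<omega>) = h \<bullet> (f x + G x *v u - (A *v x + B *v u)) + h \<bullet> (A *v x + B *v mu x \<theta>)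
        + inner a (eps \<omega>) + inner h (w \<omega>)"
      by (simp add: u_def a_def dot_lmul_matrix inner_add_right inner_diff_right matrix_vector_right_distrib)
    also have "\<dots> \<le> d $ j" using e \<omega>(2) by (simp add: c_def)
    finally show "H $ j \<bullet> (f x + G x *v (mu x \<theta> + eps \<omega>) + w \<omega>) \<le> d $ j" by (simp add: u_def h_def)
  qed
  show "measure M {\<omega> \<in> space M. H $ j \<bullet> (f x + G x *v (mu x \<theta> + eps \<omega>) + w \<omega>) \<le> d $ j} \<ge> q"
    using tail finite_measure_mono[OF sub meas] by linarith
qed

end
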